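(* Let $G$ be a ribbon graph whose underlying surface is oriented, and let $\widetilde L_G$ be the natural diagram of the medial alternating link $L_G\subset G\times I$ (all notions as defined in the context). Then $$\langle \widetilde L_G\rangle(A,B,d) \;=\; A^{r(G)}\,B^{n(G)}\,d^{k(G)-1}\,R_G\!\left(\frac{Bd}{A},\,\frac{Ad}{B},\,\frac{1}{d}\right).$$
   Context: A ribbon graph $G$ is a graph $\Gamma=(V,E)$ (loops and multiple edges allowed) with a fixed cyclic order of the edge-ends at each vertex; equivalently a compact surface with boundary that is a union of closed discs for vertices and closed discs ("ribbons") for edges, such that these discs meet in disjoint line segments, each segment lies on the boundary of exactly one vertex disc and one edge ribbon, and each edge ribbon contains exactly two such segments. We use the same letter $G$ for the surface, assumed oriented (orientation given by counterclockwise rotation). For a ribbon graph $F$: $v(F)$ = number of vertices, $e(F)$ = number of edges, $k(F)$ = number of connected components, $r(F)=v(F)-k(F)$ (rank), $n(F)=e(F)-r(F)$ (nullity), $\mathrm{bc}(F)$ = number of boundary components of the surface $F$. A spanning subgraph of $G$ is a ribbon subgraph containing all vertices and a subset of the edges; $\mathcal F(G)$ is the set of spanning subgraphs. The Bollobás–Riordan polynomial is $$R_G(x,y,z)=\sum_{F\in\mathcal F(G)} x^{r(G)-r(F)}\,y^{n(F)}\,z^{k(F)-\mathrm{bc}(F)+n(F)}.$$ Link diagrams: $I=[0,1]$; a link $L\subset G\times I$ in general position w.r.t. the projection $\pi:G\times I\to G$ has a diagram $\widetilde L$: the immersed curve $\pi(L)$ with finitely many transverse double points, each marked with over/undercrossing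 information. At a crossing, the $A$-splitting joins the two local regions swept out by the overcrossing arc when it is rotated according to the orientation of $G$ (counterclockwise) until it reaches the undercrossing arc; the $B$-splitting joins the other two regions. A state $S$ is a choice of $A$- or $B$-splitting at every crossing; $\alpha(S),\beta(S)$ are the numbers of $A$- and $B$-splittings, and $\delta(S)$ is the number of connected components of the resulting curve on $G$. The Kauffman bracket is $\langle\widetilde L\rangle(A,B,d)=\sum_S A^{\alpha(S)}B^{\beta(S)}d^{\delta(S)-1}$, the sum over all states. Medial alternating link: the medial graph $H_G$ is embedded in the surface $G$ with one 4-valent vertex at the middle of each edge ribbon; its edges run along the edge ribbons and, on reaching a vertex disc, turn to the next edge ribbon in the cyclic order at that vertex. Colour the regions of $G\setminus H_G$ black if they contain a vertex of $\Gamma$ and white otherwise. The natural diagram $\widetilde L_G$ is obtained from $H_G$ by making each vertex a crossing so that the overcrossing branch, rotated according to the orientation of $G$ until it reaches the undercrossing branch, sweeps out the black regions; $L_G\subset G\times I$ is the corresponding link. *)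

theory Defs
  imports "HOL-Combinatorics.Permutations"
begin

(* V : vertices, D : darts (edge-ends), vert h : vertex at which dart h sits,
   alpha : fixed-point-free involution pairing the two ends of an edge,
   sigma : counterclockwise successor of a dart in the cyclic order at its vertex
   (one sigma-cycle per vertex having darts; vertices without darts are allowed).
   --------------------------------------------------------------------- *)

definition ribbon_graph ::
  "'v set \<Rightarrow> 'd set \<Rightarrow> ('d \<Rightarrow> 'v) \<Rightarrow> ('d \<Rightarrow> 'd) \<Rightarrow> ('d \<Rightarrow> 'd) \<Rightarrow> bool" where
  "ribbon_graph V D vert alpha sigma \<longleftrightarrow>
     finite V \<and> finite D \<and> alpha permutes D \<and> sigma permutes D \<and>
     (\<forall>h\<in>D. alpha h \<noteq> h \<and> alpha (alpha h) = h) \<and>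
     (\<forall>h\<in>D. vert h \<in> V \<and> vert (sigma h) = vert h) \<and>
     (\<forall>h\<in>D. \<forall>h'\<in>D. vert h = vert h' \<longrightarrow> (\<exists>n. (sigma ^^ n) h = h'))"

definition rg_edges :: "('d \<Rightarrow> 'd) \<Rightarrow> 'd set \<Rightarrow> 'd set set" where
  "rg_edges alpha S = (\<lambda>h. {h, alpha h}) ` S"

(* spanning subgraphs = all vertices + a set of edges, i.e. an alpha-closed set of darts *)
definition spanning_subgraphs :: "('d \<Rightarrow> 'd) \<Rightarrow> 'd set \<Rightarrow> 'd set set" where
  "spanning_subgraphs alpha D = {S. S \<subseteq> D \<and> alpha ` S \<subseteq> S}"

definition rg_adj :: "('d \<Rightarrow> 'v) \<Rightarrow> ('d \<Rightarrow> 'd) \<Rightarrow> 'd set \<Rightarrow> ('v \<times> 'v) set" where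
  "rg_adj vert alpha S = {(vert h, vert (alpha h)) | h. h \<in> S}"

definition rg_k :: "'v set \<Rightarrow> ('d \<Rightarrow> 'v) \<Rightarrow> ('d \<Rightarrow> 'd) \<Rightarrow> 'd set \<Rightarrow> nat" where
  "rg_k V vert alpha S = card ((\<lambda>v. {w. (v, w) \<in> (rg_adj vert alpha S)\<^sup>*}) ` V)"

definition rg_r :: "'v set \<Rightarrow> ('d \<Rightarrow> 'v) \<Rightarrow> ('d \<Rightarrow> 'd) \<Rightarrow> 'd set \<Rightarrow> int" where
  "rg_r V vert alpha S = int (card V) - int (rg_k V vert alpha S)"

definition rg_n :: "'v set \<Rightarrow> ('d \<Rightarrow> 'v) \<Rightarrow> ('d \<Rightarrow> 'd) \<Rightarrow> 'd set \<Rightarrow> int" where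
  "rg_n V vert alpha S = int (card (rg_edges alpha S)) - rg_r V vert alpha S"

(* rotation of the ribbon subgraph with dart set S: next dart of S counterclockwise *)
definition restr_rot :: "('d \<Rightarrow> 'd) \<Rightarrow> 'd set \<Rightarrow> 'd \<Rightarrow> 'd" where
  "restr_rot sigma S h = (sigma ^^ (LEAST m. 0 < m \<and> (sigma ^^ m) h \<in> S)) h"

(* bc(F): boundary components = orbits of the face permutation (restr_rot o alpha)
   on the darts of F, plus one boundary circle for each vertex of F without darts *)
definition rg_bc :: "'v set \<Rightarrow> ('d \<Rightarrow> 'v) \<Rightarrow> ('d \<Rightarrow> 'd) \<Rightarrow> ('d \<Rightarrow> 'd) \<Rightarrow> 'd set \<Rightarrow> nat" where
  "rg_bc V vert alpha sigma S =
     card ((\<lambda>h. {((restr_rot sigma S \<circ> alpha) ^^ n) h | n. True}) ` S)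
     + card {v \<in> V. \<forall>h\<in>S. vert h \<noteq> v}"

(* Bollobas--Riordan polynomial evaluated at (x,y,z); all exponents are >= 0 *)
definition BR_poly ::
  "'v set \<Rightarrow> 'd set \<Rightarrow> ('d \<Rightarrow> 'v) \<Rightarrow> ('d \<Rightarrow> 'd) \<Rightarrow> ('d \<Rightarrow> 'd) \<Rightarrow> 'a \<Rightarrow> 'a \<Rightarrow> 'a \<Rightarrow> 'a::field" where
  "BR_poly V D vert alpha sigma x y z =
     (\<Sum>S\<in>spanning_subgraphs alpha D.
        x powi (rg_r V vert alpha D - rg_r V vert alpha S)
      * y powi (rg_n V vert alpha S)
      * z powi (int (rg_k V vert alpha S) - int (rg_bc V vert alpha sigma S) + rg_n V vert alpha S))"

(* A crossing is (arms, i): arms = the four arm-ends at the crossing listed in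
   counterclockwise order; region j (j<4) is the local region between arms j and
   j+1 (mod 4); the overcrossing strand is {arms!i, arms!(i+2)}.  Rotating the
   overcrossing strand counterclockwise until it reaches the undercrossing sweeps
   out regions i and i+2.
   --------------------------------------------------------------------- *)

(* the splitting joining regions j and j+2: reconnect arms j+1 with j+2 and j+3 with j *)
definition join_regions :: "'e list \<Rightarrow> nat \<Rightarrow> ('e \<times> 'e) set" where
  "join_regions arms j =
     {(arms ! ((j + 1) mod 4), arms ! ((j + 2) mod 4)), (arms ! ((j + 3) mod 4), arms ! (j mod 4))}"

definition A_split :: "'e list \<times> nat \<Rightarrow> ('e \<times> 'e) set" where
  "A_split c = join_regions (fst c) (snd c)"

definition B_split :: "'e list \<times> nat \<Rightarrow> ('e \<times> 'e) set" where
  "B_split c = join_regions (fst c) (snd c + 1)"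

definition n_components :: "'e set \<Rightarrow> ('e \<times> 'e) set \<Rightarrow> nat" where
  "n_components X R = card ((\<lambda>x. {y. (x, y) \<in> (R \<union> R\<inverse>)\<^sup>*}) ` X)"

(* A diagram: crossings indexed by C, cr c = the crossing data, Ends = all arm-ends,
   arcs = pairs of arm-ends joined by an arc of the diagram, free = number of
   crossingless closed components.  A state is given by the set T of crossings
   receiving the A-splitting. *)
definition state_delta ::
  "'c set \<Rightarrow> ('c \<Rightarrow> 'e list \<times> nat) \<Rightarrow> ('e \<times> 'e) set \<Rightarrow> 'e set \<Rightarrow> nat \<Rightarrow> 'c set \<Rightarrow> nat" where
  "state_delta C cr arcs Ends free T =
     n_components Ends (arcs \<union> (\<Union>c\<in>T. A_split (cr c)) \<union> (\<Union>c\<in>C - T. B_split (cr c))) + free"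

definition kauffman_bracket ::
  "'c set \<Rightarrow> ('c \<Rightarrow> 'e list \<times> nat) \<Rightarrow> ('e \<times> 'e) set \<Rightarrow> 'e set \<Rightarrow> nat \<Rightarrow> 'a \<Rightarrow> 'a \<Rightarrow> 'a \<Rightarrow> 'a::field" where
  "kauffman_bracket C cr arcs Ends free A B d =
     (\<Sum>T\<in>Pow C. A ^ card T * B ^ (card C - card T)
                  * d powi (int (state_delta C cr arcs Ends free T) - 1))"

(* The medial graph has one arc per dart h, running around vert h from the
   crossing on the edge of h to the crossing on the edge of sigma h.  Its end at
   the crossing of h is (h, True) ("left of h"), its end at the crossing of
   sigma h is (h, False).
   Regions 0 and 2 (between the two arms at h, resp. at alpha h) contain the
   vertices vert h, vert (alpha h) and are black; regions 1, 3 are white.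
   --------------------------------------------------------------------- *)

definition medial_arms :: "('d \<Rightarrow> 'd) \<Rightarrow> ('d \<Rightarrow> 'd) \<Rightarrow> 'd \<Rightarrow> ('d \<times> bool) list" where
  "medial_arms alpha sigma h =
     [(h, True), (inv sigma h, False), (alpha h, True), (inv sigma (alpha h), False)]"

definition medial_black :: "nat \<Rightarrow> bool" where
  "medial_black j = even j"

(* overcrossing chosen so that its counterclockwise rotation sweeps the black regions *)
definition natural_over :: "(nat \<Rightarrow> bool) \<Rightarrow> nat" where
  "natural_over black = (if black 0 \<and> black 2 then 0 else 1)"

definition medial_crossing :: "('d \<Rightarrow> 'd) \<Rightarrow> ('d \<Rightarrow> 'd) \<Rightarrow> 'd set \<Rightarrow> ('d \<times> bool) list \<times> nat" where
  "medial_crossing alpha sigma e = (medial_arms alpha sigma (SOME h. h \<in> e), natural_over medial_black)"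

(* Kauffman bracket of the natural diagram of L_G; each vertex without darts
   contributes a crossingless circle of the medial graph around it *)
definition medial_bracket ::
  "'v set \<Rightarrow> 'd set \<Rightarrow> ('d \<Rightarrow> 'v) \<Rightarrow> ('d \<Rightarrow> 'd) \<Rightarrow> ('d \<Rightarrow> 'd) \<Rightarrow> 'a \<Rightarrow> 'a \<Rightarrow> 'a \<Rightarrow> 'a::field" where
  "medial_bracket V D vert alpha sigma A B d =
     kauffman_bracket (rg_edges alpha D) (medial_crossing alpha sigma)
       {((h, True), (h, False)) | h. h \<in> D} (D \<times> UNIV)
       (card {v \<in> V. \<forall>h\<in>D. vert h \<noteq> v}) A B d"

end

theory Submission
  imports Defs
begin


definition orb :: "('a \<Rightarrow> 'a) \<Rightarrow> 'a \<Rightarrow> 'a set" where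
  "orb f x = {(f ^^ n) x | n. True}"

lemma orb_self: "x \<in> orb f x"
proof -
  have "x = (f ^^ 0) x" by simp
  then show ?thesis unfolding orb_def by blast
qed

lemma orb_pow: "(f ^^ n) x \<in> orb f x"
  unfolding orb_def by auto

lemma orb_trans: "y \<in> orb f x \<Longrightarrow> orb f y \<subseteq> orb f x"
  proof
  fix z assume "y \<in> orb f x" "z \<in> orb f y"
  then obtain n m where "y = (f ^^ n) x" "z = (f ^^ m) y" unfolding orb_def by auto
  then have "z = (f ^^ (m + n)) x" by (simp add: funpow_add)
  then show "z \<in> orb f x" unfolding orb_def by blast
qed

lemma orb_eq: "orb f x = orb f y \<longleftrightarrow> y \<in> orb f x \<and> x \<in> orb f y"
proof
  assume "orb f x = orb f y"
  then show "y \<in> orb f x \<and> x \<in> orb f y" using orb_self[of y f] orb_self[of x f] by simp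
next
  assume "y \<in> orb f x \<and> x \<in> orb f y"
  then show "orb f x = orb f y" using orb_trans[of y f x] orb_trans[of x f y] by auto
qed

lemma perm_pow_id: "(f ^^ p) x = x \<Longrightarrow> (f ^^ (p * n)) x = x"
proof (induction n)
  case 0 then show ?case by simp
next
  case (Suc n)
  have "(f ^^ (p * Suc n)) x = (f ^^ p) ((f ^^ (p * n)) x)"
    by (simp add: funpow_add)
  then show ?case using Suc by simp
qed

lemma orb_perm_sym:
  assumes "permutation f" "y \<in> orb f x" shows "x \<in> orb f y"
proof -
  obtain n where y: "y = (f ^^ n) x" using assms(2) unfolding orb_def by auto
  obtain p where p: "p > 0" "(f ^^ p) x = x" using permutation_self[OF assms(1)] by blast
  have "(f ^^ ((p - 1) * n)) y = (f ^^ ((p - 1) * n + n)) x"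
    by (simp add: y funpow_add)
  also have "(p - 1) * n + n = p * n" using p(1)
    by (cases p) auto
  finally have "(f ^^ ((p - 1) * n)) y = x" using perm_pow_id[OF p(2)] by simp
  then show ?thesis unfolding orb_def by blast
qed

lemma card_image_tool:
  assumes "\<And>x y. x \<in> X \<Longrightarrow> y \<in> X \<Longrightarrow> f x = f y \<longleftrightarrow> g x = g y"
  shows "card (f ` X) = card (g ` X)"
proof -
  define h where "h = (\<lambda>z. g (inv_into X f z))"
  have "bij_betw h (f ` X) (g ` X)"
    unfolding bij_betw_def inj_on_def h_def
  proof (intro conjI ballI impI)
    fix a b assume a: "a \<in> f ` X" and b: "b \<in> f ` X" and e: "g (inv_into X f a) = g (inv_into X f b)"
    have "inv_into X f a \<in> X" "inv_into X f b \<in> X" using a b by (auto intro: inv_into_into)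
    then have "f (inv_into X f a) = f (inv_into X f b)" using assms e by blast
    then show "a = b" using a b by (simp add: f_inv_into_f)
  next
    show "(\<lambda>z. g (inv_into X f z)) ` f ` X = g ` X"
    proof
      show "(\<lambda>z. g (inv_into X f z)) ` f ` X \<subseteq> g ` X"
        by (auto intro: inv_into_into)
      show "g ` X \<subseteq> (\<lambda>z. g (inv_into X f z)) ` f ` X"
      proof
        fix z assume "z \<in> g ` X"
        then obtain x where x: "x \<in> X" "z = g x" by auto
        have i: "inv_into X f (f x) \<in> X" using x by (auto intro: inv_into_into)
        have "f (inv_into X f (f x)) = f x" using x by (simp add: f_inv_into_f)
        then have "g (inv_into X f (f x)) = g x" using assms i x(1) by blast
        then show "z \<in> (\<lambda>z. g (inv_into X f z)) ` f ` X" using x by force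
      qed
    qed
  qed
  then show ?thesis by (rule bij_betw_same_card)
qed



definition phi :: "('d \<Rightarrow> 'd) \<Rightarrow> ('d \<Rightarrow> 'd) \<Rightarrow> 'd set \<Rightarrow> 'd \<Rightarrow> 'd" where
  "phi alpha sigma S y = (if sigma y \<in> S then alpha (sigma y) else sigma y)"

locale rgl =
  fixes V :: "'v set" and D :: "'d set" and vert :: "'d \<Rightarrow> 'v" and alpha sigma :: "'d \<Rightarrow> 'd"
  assumes rg: "ribbon_graph V D vert alpha sigma"
begin

lemma finV: "finite V" and finD: "finite D" and aperm: "alpha permutes D" and sperm: "sigma permutes D"
  and anfix: "h \<in> D \<Longrightarrow> alpha h \<noteq> h" and ainv: "h \<in> D \<Longrightarrow> alpha (alpha h) = h"
  and vertV: "h \<in> D \<Longrightarrow> vert h \<in> V" and vsig: "h \<in> D \<Longrightarrow> vert (sigma h) = vert h"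
  and conn: "h \<in> D \<Longrightarrow> h' \<in> D \<Longrightarrow> vert h = vert h' \<Longrightarrow> \<exists>n. (sigma ^^ n) h = h'"
  using rg unfolding ribbon_graph_def by auto

lemma aD: "h \<in> D \<Longrightarrow> alpha h \<in> D" using aperm by (simp add: permutes_in_image)
lemma sD: "h \<in> D \<Longrightarrow> sigma h \<in> D" using sperm by (simp add: permutes_in_image)

lemma spermutation: "permutation sigma" using permutes_imp_permutation[OF finD sperm] .

lemma sig_pow: "h \<in> D \<Longrightarrow> (sigma ^^ n) h \<in> D \<and> vert ((sigma ^^ n) h) = vert h"
  by (induction n) (auto simp: sD vsig)

context
  fixes S assumes SD: "S \<subseteq> D" and aS: "alpha ` S \<subseteq> S"
begin

lemma aS': "x \<in> S \<Longrightarrow> alpha x \<in> S" using aS by blast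

lemma aS_eq: "alpha ` S = S"
proof
  show "S \<subseteq> alpha ` S"
  proof
    fix x assume "x \<in> S"
    then have "x = alpha (alpha x)" "alpha x \<in> S" using ainv SD aS' by auto
    then show "x \<in> alpha ` S" by blast
  qed
qed (rule aS)

lemma phi_perm: "phi alpha sigma S permutes D"
proof -
  define tau where "tau = (\<lambda>z. if z \<in> S then alpha z else z)"
  have tt: "tau (tau z) = z" for z
    using ainv SD aS' unfolding tau_def by auto
  have "tau permutes D"
    unfolding permutes_def
  proof (intro conjI allI impI)
    fix x assume "x \<notin> D" then show "tau x = x" using SD unfolding tau_def by auto
  next
    fix y show "\<exists>!x. tau x = y"
    proof
      show "tau (tau y) = y" by (rule tt)
    next
      fix x assume "tau x = y" then show "x = tau y" using tt by metis
    qed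
  qed
  moreover have "phi alpha sigma S = tau \<circ> sigma"
    unfolding tau_def phi_def by (rule ext) simp
  ultimately show ?thesis using permutes_compose[OF sperm] by simp
qed

lemma phi_permutation: "permutation (phi alpha sigma S)"
  using permutes_imp_permutation[OF finD phi_perm] .

lemma phi_sym: "y \<in> orb (phi alpha sigma S) x \<Longrightarrow> x \<in> orb (phi alpha sigma S) y"
  using orb_perm_sym[OF phi_permutation] .

lemma phiD: "y \<in> D \<Longrightarrow> phi alpha sigma S y \<in> D"
  using phi_perm by (simp add: permutes_in_image)

lemma phi_powD: "y \<in> D \<Longrightarrow> (phi alpha sigma S ^^ n) y \<in> D"
  by (induction n) (auto simp: phiD)

lemma psi_step:
  assumes x: "x \<in> S"
  shows "\<exists>k>0. (phi alpha sigma S ^^ k) x = alpha (restr_rot sigma S x)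
     \<and> (\<forall>j. 0 < j \<and> j < k \<longrightarrow> (phi alpha sigma S ^^ j) x \<notin> S)
     \<and> alpha (restr_rot sigma S x) \<in> S"
proof -
  obtain p where p: "p > 0" "(sigma ^^ p) x = x" using permutation_self[OF spermutation] by blast
  define m where "m = (LEAST m. 0 < m \<and> (sigma ^^ m) x \<in> S)"
  have ex: "0 < p \<and> (sigma ^^ p) x \<in> S" using p x by simp
  have m: "0 < m \<and> (sigma ^^ m) x \<in> S" unfolding m_def by (rule LeastI[of _ p], rule ex)
  have mlt: "\<And>j. 0 < j \<Longrightarrow> j < m \<Longrightarrow> (sigma ^^ j) x \<notin> S"
    unfolding m_def using not_less_Least by blast
  have rr: "restr_rot sigma S x = (sigma ^^ m) x" unfolding restr_rot_def m_def ..
  have eq: "j < m \<Longrightarrow> (phi alpha sigma S ^^ j) x = (sigma ^^ j) x" for j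
  proof (induction j)
    case 0 then show ?case by simp
  next
    case (Suc j)
    have "(sigma ^^ Suc j) x \<notin> S" using mlt[of "Suc j"] Suc.prems by simp
    then show ?case using Suc by (simp add: phi_def)
  qed
  have "(phi alpha sigma S ^^ m) x = alpha ((sigma ^^ m) x)"
  proof -
    obtain i where i: "m = Suc i" using m by (cases m) auto
    have "(phi alpha sigma S ^^ m) x = phi alpha sigma S ((sigma ^^ i) x)"
      using eq[of i] i by simp
    also have "\<dots> = alpha ((sigma ^^ m) x)" using m i by (simp add: phi_def)
    finally show ?thesis .
  qed
  moreover have "\<forall>j. 0 < j \<and> j < m \<longrightarrow> (phi alpha sigma S ^^ j) x \<notin> S"
    using eq mlt by simp
  moreover have "alpha ((sigma ^^ m) x) \<in> S" using m aS' by blast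
  ultimately show ?thesis using m rr by metis
qed

definition psi where "psi = alpha \<circ> restr_rot sigma S"

lemma psiS: "x \<in> S \<Longrightarrow> psi x \<in> S"
  using psi_step unfolding psi_def by auto

lemma psi_powS: "x \<in> S \<Longrightarrow> (psi ^^ n) x \<in> S"
  by (induction n) (auto simp: psiS)

lemma phi_in_psi:
  "x \<in> S \<Longrightarrow> (phi alpha sigma S ^^ n) x \<in> S \<Longrightarrow> (phi alpha sigma S ^^ n) x \<in> orb psi x"
proof (induction n arbitrary: x rule: less_induct)
  case (less n)
  show ?case
  proof (cases "n = 0")
    case True then show ?thesis using orb_self by simp
  next
    case False
    obtain k where k: "k > 0" "(phi alpha sigma S ^^ k) x = psi x"
       "\<forall>j. 0 < j \<and> j < k \<longrightarrow> (phi alpha sigma S ^^ j) x \<notin> S"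
      using psi_step[OF less.prems(1)] unfolding psi_def by auto
    have "\<not> n < k" using k(3) False less.prems(2) by auto
    then have nk: "n = (n - k) + k" by simp
    have e: "(phi alpha sigma S ^^ n) x = (phi alpha sigma S ^^ (n - k)) (psi x)"
      by (subst nk, simp only: funpow_add comp_apply k(2))
    have "(phi alpha sigma S ^^ (n - k)) (psi x) \<in> orb psi (psi x)"
      using less.IH[of "n - k" "psi x"] k(1) False psiS[OF less.prems(1)] less.prems(2) e by simp
    moreover have "orb psi (psi x) \<subseteq> orb psi x"
      using orb_trans orb_pow[of 1 psi x] by simp
    ultimately show ?thesis using e by auto
  qed
qed

lemma psi_in_phi: "x \<in> S \<Longrightarrow> orb psi x \<subseteq> orb (phi alpha sigma S) x"
proof -
  assume x: "x \<in> S"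
  have "(psi ^^ n) x \<in> orb (phi alpha sigma S) x" for n
  proof (induction n)
    case 0 then show ?case using orb_self by simp
  next
    case (Suc n)
    obtain k where k: "(phi alpha sigma S ^^ k) ((psi ^^ n) x) = psi ((psi ^^ n) x)"
      using psi_step[OF psi_powS[OF x, of n]] unfolding psi_def by auto
    have "psi ((psi ^^ n) x) \<in> orb (phi alpha sigma S) ((psi ^^ n) x)"
      using orb_pow k by metis
    then show ?case using orb_trans[OF Suc] by auto
  qed
  then show ?thesis unfolding orb_def by auto
qed

lemma S_orb_eq:
  assumes "x \<in> S" "y \<in> S"
  shows "orb (phi alpha sigma S) x = orb (phi alpha sigma S) y \<longleftrightarrow> orb psi x = orb psi y"
proof
  assume "orb (phi alpha sigma S) x = orb (phi alpha sigma S) y"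
  then have "y \<in> orb (phi alpha sigma S) x" "x \<in> orb (phi alpha sigma S) y" using orb_eq[of "phi alpha sigma S" x y] by auto
  then obtain n m where nm: "y = (phi alpha sigma S ^^ n) x" "x = (phi alpha sigma S ^^ m) y"
    unfolding orb_def by auto
  have "y \<in> orb psi x" using phi_in_psi[of x n] assms nm(1) by simp
  moreover have "x \<in> orb psi y" using phi_in_psi[of y m] assms nm(2) by simp
  ultimately show "orb psi x = orb psi y" using orb_eq[of psi x y] by auto
next
  assume "orb psi x = orb psi y"
  then have "y \<in> orb psi x" "x \<in> orb psi y" using orb_eq[of psi x y] by auto
  then show "orb (phi alpha sigma S) x = orb (phi alpha sigma S) y"
    using psi_in_phi assms orb_eq[of "phi alpha sigma S" x y] by blast
qed

lemma psi_alpha_pow: "(psi ^^ n) (alpha x) = alpha (((restr_rot sigma S \<circ> alpha) ^^ n) x)"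
  by (induction n) (auto simp: psi_def)

lemma orb_psi_alpha: "orb psi (alpha x) = alpha ` orb (restr_rot sigma S \<circ> alpha) x"
  unfolding orb_def psi_alpha_pow by auto

lemma card_S:
  "card (orb (phi alpha sigma S) ` S) = card (orb (restr_rot sigma S \<circ> alpha) ` S)"
proof -
  have "card (orb (phi alpha sigma S) ` S) = card (orb psi ` S)"
    by (rule card_image_tool) (rule S_orb_eq)
  also have "orb psi ` S = (\<lambda>x. orb psi (alpha x)) ` S"
    using aS_eq by (metis image_image)
  also have "card \<dots> = card (orb (restr_rot sigma S \<circ> alpha) ` S)"
  proof (rule card_image_tool)
    fix x y
    have "inj alpha" using aperm by (rule permutes_inj)
    then show "orb psi (alpha x) = orb psi (alpha y) \<longleftrightarrow>
        orb (restr_rot sigma S \<circ> alpha) x = orb (restr_rot sigma S \<circ> alpha) y"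
      unfolding orb_psi_alpha by (simp add: inj_image_eq_iff)
  qed
  finally show ?thesis .
qed


lemma D2_phi: "y \<in> D \<Longrightarrow> \<forall>h\<in>S. vert h \<noteq> vert y \<Longrightarrow> (phi alpha sigma S ^^ n) y = (sigma ^^ n) y"
proof (induction n)
  case 0 then show ?case by simp
next
  case (Suc n)
  have "(sigma ^^ Suc n) y \<in> D \<and> vert ((sigma ^^ Suc n) y) = vert y" using sig_pow Suc.prems(1) by blast
  then have "(sigma ^^ Suc n) y \<notin> S" using Suc.prems(2) by auto
  then show ?case using Suc by (simp add: phi_def)
qed

lemma reach_S: "(sigma ^^ n) y \<in> S \<Longrightarrow> \<exists>m. (phi alpha sigma S ^^ m) y \<in> S"
proof (induction n arbitrary: y)
  case 0 then show ?case by (metis funpow_0)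
next
  case (Suc n)
  show ?case
  proof (cases "sigma y \<in> S")
    case True
    then have "(phi alpha sigma S ^^ 1) y \<in> S" using aS' by (simp add: phi_def)
    then show ?thesis by blast
  next
    case False
    have "(sigma ^^ n) (sigma y) \<in> S" using Suc.prems by (simp only: funpow_Suc_right comp_apply)
    then obtain m where "(phi alpha sigma S ^^ m) (sigma y) \<in> S" using Suc.IH by blast
    moreover have "phi alpha sigma S y = sigma y" using False by (simp add: phi_def)
    ultimately have "(phi alpha sigma S ^^ Suc m) y \<in> S" by (simp only: funpow_Suc_right comp_apply)
    then show ?thesis by blast
  qed
qed

lemma card_D:
  "card (orb (phi alpha sigma S) ` D) = card (orb (phi alpha sigma S) ` S)
     + card (vert ` {y \<in> D. \<forall>h\<in>S. vert h \<noteq> vert y})"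
proof -
  let ?O = "orb (phi alpha sigma S)"
  let ?D2 = "{y \<in> D. \<forall>h\<in>S. vert h \<noteq> vert y}"
  have a: "?O ` D = ?O ` S \<union> ?O ` ?D2"
  proof
    show "?O ` S \<union> ?O ` ?D2 \<subseteq> ?O ` D" using SD by auto
    show "?O ` D \<subseteq> ?O ` S \<union> ?O ` ?D2"
    proof
      fix z assume "z \<in> ?O ` D"
      then obtain y where y: "y \<in> D" "z = ?O y" by auto
      show "z \<in> ?O ` S \<union> ?O ` ?D2"
      proof (cases "y \<in> ?D2")
        case True then show ?thesis using y by auto
      next
        case False
        then obtain h where h: "h \<in> S" "vert h = vert y" using y by auto
        then obtain n where "(sigma ^^ n) y = h" using conn[of y h] y SD by auto
        then obtain m where m: "(phi alpha sigma S ^^ m) y \<in> S" using reach_S h by metis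
        have "(phi alpha sigma S ^^ m) y \<in> ?O y" by (rule orb_pow)
        then have "?O y = ?O ((phi alpha sigma S ^^ m) y)"
          using phi_sym orb_eq by metis
        then show ?thesis using y m by auto
      qed
    qed
  qed
  have b: "?O ` S \<inter> ?O ` ?D2 = {}"
  proof (rule ccontr)
    assume "?O ` S \<inter> ?O ` ?D2 \<noteq> {}"
    then obtain s y where sy: "s \<in> S" "y \<in> ?D2" "?O s = ?O y" by auto
    then have "s \<in> ?O y" using orb_self by metis
    then obtain n where "s = (phi alpha sigma S ^^ n) y" unfolding orb_def by auto
    then have "s = (sigma ^^ n) y" using D2_phi sy(2) by auto
    then have "vert s = vert y" using sig_pow sy(2) by auto
    then show False using sy by auto
  qed
  have c: "card (?O ` ?D2) = card (vert ` ?D2)"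
  proof (rule card_image_tool)
    fix y y' assume yy: "y \<in> ?D2" "y' \<in> ?D2"
    show "?O y = ?O y' \<longleftrightarrow> vert y = vert y'"
    proof
      assume "?O y = ?O y'"
      then have "y' \<in> ?O y" using orb_self by metis
      then obtain n where "y' = (phi alpha sigma S ^^ n) y" unfolding orb_def by auto
      then have "y' = (sigma ^^ n) y" using D2_phi yy(1) by auto
      then show "vert y = vert y'" using sig_pow yy(1) by auto
    next
      assume v: "vert y = vert y'"
      obtain n where n: "(sigma ^^ n) y = y'" using conn[of y y'] yy v by auto
      obtain n' where n': "(sigma ^^ n') y' = y" using conn[of y' y] yy v by auto
      have "y' \<in> ?O y" using n D2_phi[of y n] yy(1) orb_pow[of n "phi alpha sigma S" y] by simp
      moreover have "y \<in> ?O y'" using n' D2_phi[of y' n'] yy(2) orb_pow[of n' "phi alpha sigma S" y'] by simp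
      ultimately show "?O y = ?O y'" using orb_eq by metis
    qed
  qed
  have "card (?O ` D) = card (?O ` S) + card (?O ` ?D2)"
    unfolding a by (rule card_Un_disjoint) (use finD SD b in \<open>auto intro: finite_subset\<close>)
  then show ?thesis using c by simp
qed

end
end


lemma alg:
  fixes A B d :: "'a::field"
  assumes A: "A \<noteq> 0" and B: "B \<noteq> 0" and d: "d \<noteq> 0" and eE: "e \<le> E"
  shows "A ^ e * B ^ (E - e) * d powi (int b - 1) =
     A powi (v - kG) * B powi (int E - (v - kG)) * d powi (kG - 1) *
     ((B * d / A) powi ((v - kG) - (v - kF)) * (A * d / B) powi (int e - (v - kF))
      * (1 / d) powi (kF - int b + (int e - (v - kF))))"
proof -
  define x where "x = (v - kG) - (v - kF)"
  define y where "y = int e - (v - kF)"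
  define z where "z = kF - int b + (int e - (v - kF))"
  have nz: "A powi m \<noteq> 0" "B powi m \<noteq> 0" "d powi m \<noteq> 0" for m
    using A B d by auto
  have "A powi (v - kG) * B powi (int E - (v - kG)) * d powi (kG - 1) *
     ((B * d / A) powi x * (A * d / B) powi y * (1 / d) powi z)
     = A powi (v - kG) * B powi (int E - (v - kG)) * d powi (kG - 1) *
     ((B powi x * d powi x / A powi x) * (A powi y * d powi y / B powi y) * (1 / d powi z))"
    by (simp add: power_int_mult_distrib power_int_divide_distrib)
  also have "\<dots> = ((A powi (v - kG) * A powi y) / A powi x) * ((B powi (int E - (v - kG)) * B powi x) / B powi y)
       * ((d powi (kG - 1) * d powi x * d powi y) / d powi z)"
    using nz by (simp add: field_simps)
  also have "\<dots> = A powi ((v - kG) + y - x) * B powi ((int E - (v - kG)) + x - y) * d powi ((kG - 1) + x + y - z)"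
    using A B d by (simp add: power_int_add power_int_diff)
  also have "(v - kG) + y - x = int e" unfolding x_def y_def by simp
  also have "(int E - (v - kG)) + x - y = int (E - e)" unfolding x_def y_def using eE by simp
  also have "(kG - 1) + x + y - z = int b - 1" unfolding x_def y_def z_def by simp
  finally show ?thesis unfolding x_def y_def z_def by (simp add: power_int_of_nat)
qed



context rgl begin

lemma edge_some:
  assumes "c \<in> rg_edges alpha D"
  shows "(SOME h. h \<in> c) \<in> D \<and> c = {SOME h. h \<in> c, alpha (SOME h. h \<in> c)}"
proof -
  obtain h where h: "h \<in> D" "c = {h, alpha h}" using assms unfolding rg_edges_def by auto
  have "(SOME h. h \<in> c) \<in> c" using h by (metis insertI1 someI)
  then show ?thesis using h ainv aD by auto
qed

lemma A_split_eq:
  "A_split (medial_crossing alpha sigma c) =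
    {((inv sigma (SOME h. h \<in> c), False), (alpha (SOME h. h \<in> c), True)),
     ((inv sigma (alpha (SOME h. h \<in> c)), False), ((SOME h. h \<in> c), True))}"
  by (simp add: A_split_def medial_crossing_def join_regions_def medial_arms_def
      natural_over_def medial_black_def)

lemma B_split_eq:
  "B_split (medial_crossing alpha sigma c) =
    {((alpha (SOME h. h \<in> c), True), (inv sigma (alpha (SOME h. h \<in> c)), False)),
     (((SOME h. h \<in> c), True), (inv sigma (SOME h. h \<in> c), False))}"
  by (simp add: B_split_def medial_crossing_def join_regions_def medial_arms_def
      natural_over_def medial_black_def)

lemma sinv: "sigma (inv sigma x) = x" "inv sigma (sigma x) = x"
  using permutes_inverses[OF sperm] by auto

lemma sinvD: "x \<in> D \<Longrightarrow> inv sigma x \<in> D"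
  using sperm by (metis permutes_in_image sinv(1))


context fixes T assumes T: "T \<subseteq> rg_edges alpha D"
begin

lemma UT_D: "\<Union>T \<subseteq> D"
  using T aD unfolding rg_edges_def by auto

lemma UT_a: "alpha ` \<Union>T \<subseteq> \<Union>T"
proof
  fix x assume "x \<in> alpha ` \<Union>T"
  then obtain y c where yc: "x = alpha y" "y \<in> c" "c \<in> T" by auto
  then obtain h where h: "h \<in> D" "c = {h, alpha h}" using T unfolding rg_edges_def by auto
  then have "x \<in> c" using yc ainv by auto
  then show "x \<in> \<Union>T" using yc by auto
qed

lemma memUT: "x \<in> D \<Longrightarrow> x \<in> \<Union>T \<longleftrightarrow> {x, alpha x} \<in> T"
proof
  assume x: "x \<in> D" "x \<in> \<Union>T"
  then obtain c where c: "x \<in> c" "c \<in> T" by auto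
  then obtain h where h: "h \<in> D" "c = {h, alpha h}" using T unfolding rg_edges_def by auto
  then have "c = {x, alpha x}" using c ainv by auto
  then show "{x, alpha x} \<in> T" using c by simp
qed auto

definition RR where
  "RR = {((h, True), (h, False)) | h. h \<in> D}
        \<union> (\<Union>c\<in>T. A_split (medial_crossing alpha sigma c))
        \<union> (\<Union>c\<in>rg_edges alpha D - T. B_split (medial_crossing alpha sigma c))"

abbreviation "ph \<equiv> phi alpha sigma (\<Union>T)"

lemma RR_sub:
  assumes "(p, q) \<in> RR"
  shows "fst p \<in> D \<and> fst q \<in> D \<and> (fst q = fst p \<or> fst q = ph (fst p) \<or> fst p = ph (fst q))"
  using assms unfolding RR_def
proof (elim UnE)
  assume "(p, q) \<in> {((h, True), (h, False)) | h. h \<in> D}"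
  then show ?thesis by auto
next
  assume "(p, q) \<in> (\<Union>c\<in>T. A_split (medial_crossing alpha sigma c))"
  then obtain c where c: "c \<in> T" "(p, q) \<in> A_split (medial_crossing alpha sigma c)" by auto
  define h0 where "h0 = (SOME h. h \<in> c)"
  have h0: "h0 \<in> D" "c = {h0, alpha h0}" using edge_some[of c] c T unfolding h0_def by auto
  have pq: "(p, q) = ((inv sigma h0, False), (alpha h0, True)) \<or>
            (p, q) = ((inv sigma (alpha h0), False), (h0, True))"
    using c(2) unfolding A_split_eq h0_def by auto
  have i1: "h0 \<in> \<Union>T" "alpha h0 \<in> \<Union>T" using h0 c by auto
  show ?thesis using pq
  proof
    assume e: "(p, q) = ((inv sigma h0, False), (alpha h0, True))"
    have "ph (inv sigma h0) = alpha h0" using i1 by (simp add: phi_def sinv)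
    then show ?thesis using e h0 sinvD aD by auto
  next
    assume e: "(p, q) = ((inv sigma (alpha h0), False), (h0, True))"
    have "ph (inv sigma (alpha h0)) = h0" using i1 h0 ainv by (simp add: phi_def sinv)
    then show ?thesis using e h0 sinvD aD by auto
  qed
next
  assume "(p, q) \<in> (\<Union>c\<in>rg_edges alpha D - T. B_split (medial_crossing alpha sigma c))"
  then obtain c where c: "c \<in> rg_edges alpha D" "c \<notin> T" "(p, q) \<in> B_split (medial_crossing alpha sigma c)" by auto
  define h0 where "h0 = (SOME h. h \<in> c)"
  have h0: "h0 \<in> D" "c = {h0, alpha h0}" using edge_some[of c] c unfolding h0_def by auto
  have pq: "(p, q) = ((alpha h0, True), (inv sigma (alpha h0), False)) \<or>
            (p, q) = ((h0, True), (inv sigma h0, False))"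
    using c(3) unfolding B_split_eq h0_def by auto
  have n1: "h0 \<notin> \<Union>T" using memUT[of h0] h0 c by auto
  have n2: "alpha h0 \<notin> \<Union>T" using memUT[of "alpha h0"] h0 c aD ainv by (auto simp: insert_commute)
  show ?thesis using pq
  proof
    assume e: "(p, q) = ((alpha h0, True), (inv sigma (alpha h0), False))"
    have "ph (inv sigma (alpha h0)) = alpha h0" using n2 by (simp add: phi_def sinv)
    then show ?thesis using e h0 sinvD aD by auto
  next
    assume e: "(p, q) = ((h0, True), (inv sigma h0, False))"
    have "ph (inv sigma h0) = h0" using n1 by (simp add: phi_def sinv)
    then show ?thesis using e h0 sinvD aD by auto
  qed
qed

lemma RR_arc: "h \<in> D \<Longrightarrow> ((h, True), (h, False)) \<in> RR"
  unfolding RR_def by auto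

lemma RR_phi:
  assumes y: "y \<in> D"
  shows "((y, False), (ph y, True)) \<in> RR \<union> RR\<inverse>"
proof -
  define x where "x = sigma y"
  have x: "x \<in> D" "inv sigma x = y" using y sD sinv unfolding x_def by auto
  define c where "c = {x, alpha x}"
  have cE: "c \<in> rg_edges alpha D" using x unfolding c_def rg_edges_def by auto
  define h0 where "h0 = (SOME h. h \<in> c)"
  have h0: "h0 \<in> D" "c = {h0, alpha h0}" using edge_some[OF cE] unfolding h0_def by auto
  have hx: "h0 = x \<or> h0 = alpha x" using h0 unfolding c_def by auto
  show ?thesis
  proof (cases "x \<in> \<Union>T")
    case True
    then have cT: "c \<in> T" using memUT x unfolding c_def by auto
    have phy: "ph y = alpha x" using True unfolding phi_def x_def by simp
    have "A_split (medial_crossing alpha sigma c) \<subseteq> RR" using cT unfolding RR_def by auto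
    moreover have "((y, False), (ph y, True)) \<in> A_split (medial_crossing alpha sigma c)"
      unfolding A_split_eq h0_def[symmetric] phy using hx x ainv by auto
    ultimately show ?thesis by auto
  next
    case False
    then have cT: "c \<notin> T" using memUT x unfolding c_def by auto
    have phy: "ph y = x" using False unfolding phi_def x_def by simp
    have "B_split (medial_crossing alpha sigma c) \<subseteq> RR" using cT cE unfolding RR_def by auto
    moreover have "((ph y, True), (y, False)) \<in> B_split (medial_crossing alpha sigma c)"
      unfolding B_split_eq h0_def[symmetric] phy using hx x ainv by auto
    ultimately show ?thesis by auto
  qed
qed


lemma Rel_same: "y \<in> D \<Longrightarrow> ((y, b), (y, b')) \<in> (RR \<union> RR\<inverse>)\<^sup>*"
  using RR_arc[of y] by (cases b; cases b') auto

lemma Rel_phi_step: "y \<in> D \<Longrightarrow> ((y, b), (ph y, b')) \<in> (RR \<union> RR\<inverse>)\<^sup>*"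
proof -
  assume y: "y \<in> D"
  have "((y, b), (y, False)) \<in> (RR \<union> RR\<inverse>)\<^sup>*" using Rel_same y by blast
  also have "((y, False), (ph y, True)) \<in> (RR \<union> RR\<inverse>)\<^sup>*" using RR_phi[OF y] by blast
  also have "((ph y, True), (ph y, b')) \<in> (RR \<union> RR\<inverse>)\<^sup>*"
    using Rel_same phiD[OF UT_D UT_a y] by blast
  finally show ?thesis .
qed

lemma cls_eq:
  assumes h: "h \<in> D"
  shows "{z. ((h, b), z) \<in> (RR \<union> RR\<inverse>)\<^sup>*} = orb ph h \<times> (UNIV::bool set)"
proof
  show "{z. ((h, b), z) \<in> (RR \<union> RR\<inverse>)\<^sup>*} \<subseteq> orb ph h \<times> (UNIV::bool set)"
  proof
    fix z assume "z \<in> {z. ((h, b), z) \<in> (RR \<union> RR\<inverse>)\<^sup>*}"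
    then have "((h, b), z) \<in> (RR \<union> RR\<inverse>)\<^sup>*" by simp
    then have "fst z \<in> orb ph h"
    proof (induction rule: rtrancl_induct)
      case base then show ?case using orb_self by simp
    next
      case (step y z)
      have "fst z = fst y \<or> fst z = ph (fst y) \<or> fst y = ph (fst z)"
        using step(2) RR_sub[of y z] RR_sub[of z y] by (cases y, cases z) auto
      moreover have "ph (fst y) \<in> orb ph (fst y)" using orb_pow[of 1 ph "fst y"] by simp
      moreover have "fst y = ph (fst z) \<Longrightarrow> fst z \<in> orb ph (fst y)"
        using phi_sym[OF UT_D UT_a] orb_pow[of 1 ph "fst z"] by simp
      ultimately show ?case using orb_trans[OF step(3)] step(3) by auto
    qed
    then show "z \<in> orb ph h \<times> (UNIV::bool set)" by (cases z) auto
  qed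
next
  show "orb ph h \<times> (UNIV::bool set) \<subseteq> {z. ((h, b), z) \<in> (RR \<union> RR\<inverse>)\<^sup>*}"
  proof
    fix z assume "z \<in> orb ph h \<times> (UNIV::bool set)"
    then obtain n b' where z: "z = ((ph ^^ n) h, b')" unfolding orb_def by auto
    have "((h, b), ((ph ^^ n) h, b')) \<in> (RR \<union> RR\<inverse>)\<^sup>*" for b'
    proof (induction n arbitrary: b')
      case 0 then show ?case using Rel_same h by simp
    next
      case (Suc n)
      have "((h, b), ((ph ^^ n) h, False)) \<in> (RR \<union> RR\<inverse>)\<^sup>*" by (rule Suc.IH)
      also have "(((ph ^^ n) h, False), (ph ((ph ^^ n) h), b')) \<in> (RR \<union> RR\<inverse>)\<^sup>*"
        using Rel_phi_step phi_powD[OF UT_D UT_a h] by blast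
      finally show ?case by simp
    qed
    then show "z \<in> {z. ((h, b), z) \<in> (RR \<union> RR\<inverse>)\<^sup>*}" using z by simp
  qed
qed

lemma ncomp: "n_components (D \<times> UNIV) RR = card (orb ph ` D)"
proof -
  have "(\<lambda>x. {y. (x, y) \<in> (RR \<union> RR\<inverse>)\<^sup>*}) ` (D \<times> UNIV) = (\<lambda>x. orb ph (fst x) \<times> (UNIV::bool set)) ` (D \<times> (UNIV::bool set))"
  proof (rule image_cong[OF refl])
    fix x assume "x \<in> D \<times> (UNIV::bool set)"
    then show "{y. (x, y) \<in> (RR \<union> RR\<inverse>)\<^sup>*} = orb ph (fst x) \<times> UNIV"
      using cls_eq[of "fst x" "snd x"] by (cases x) auto
  qed
  moreover have "card ((\<lambda>x. orb ph (fst x) \<times> (UNIV::bool set)) ` (D \<times> (UNIV::bool set))) = card ((\<lambda>x. orb ph (fst x)) ` (D \<times> (UNIV::bool set)))"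
  proof (rule card_image_tool)
    fix x y :: "'d \<times> bool"
    show "(orb ph (fst x) \<times> (UNIV::bool set) = orb ph (fst y) \<times> (UNIV::bool set)) = (orb ph (fst x) = orb ph (fst y))"
      by (simp add: Times_eq_cancel2)
  qed
  moreover have "(\<lambda>x. orb ph (fst x)) ` (D \<times> (UNIV::bool set)) = orb ph ` D" by force
  ultimately show ?thesis unfolding n_components_def by simp
qed


lemma delta_eq:
  "state_delta (rg_edges alpha D) (medial_crossing alpha sigma) {((h, True), (h, False)) | h. h \<in> D}
      (D \<times> UNIV) (card {v \<in> V. \<forall>h\<in>D. vert h \<noteq> v}) T = rg_bc V vert alpha sigma (\<Union>T)"
proof -
  let ?S = "\<Union>T"
  let ?D2 = "{y \<in> D. \<forall>h\<in>?S. vert h \<noteq> vert y}"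
  let ?F = "{v \<in> V. \<forall>h\<in>D. vert h \<noteq> v}"
  have sd: "state_delta (rg_edges alpha D) (medial_crossing alpha sigma) {((h, True), (h, False)) | h. h \<in> D}
      (D \<times> UNIV) (card ?F) T = n_components (D \<times> UNIV) RR + card ?F"
    unfolding state_delta_def RR_def ..
  have e1: "{v \<in> V. \<forall>h\<in>?S. vert h \<noteq> v} = ?F \<union> vert ` ?D2"
  proof
    show "{v \<in> V. \<forall>h\<in>?S. vert h \<noteq> v} \<subseteq> ?F \<union> vert ` ?D2"
    proof
      fix v assume v: "v \<in> {v \<in> V. \<forall>h\<in>?S. vert h \<noteq> v}"
      show "v \<in> ?F \<union> vert ` ?D2"
      proof (cases "\<exists>h\<in>D. vert h = v")
        case True
        then obtain h where "h \<in> D" "vert h = v" by auto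
        then show ?thesis using v by auto
      next
        case False then show ?thesis using v by auto
      qed
    qed
    show "?F \<union> vert ` ?D2 \<subseteq> {v \<in> V. \<forall>h\<in>?S. vert h \<noteq> v}"
      using UT_D vertV by auto
  qed
  have e2: "?F \<inter> vert ` ?D2 = {}" by auto
  have c2: "card {v \<in> V. \<forall>h\<in>?S. vert h \<noteq> v} = card ?F + card (vert ` ?D2)"
    unfolding e1 by (rule card_Un_disjoint) (use finV finD e2 in auto)
  have "rg_bc V vert alpha sigma ?S = card (orb (restr_rot sigma ?S \<circ> alpha) ` ?S) + card {v \<in> V. \<forall>h\<in>?S. vert h \<noteq> v}"
    unfolding rg_bc_def orb_def ..
  also have "\<dots> = card (orb ph ` ?S) + card ?F + card (vert ` ?D2)"
    using card_S[OF UT_D UT_a] c2 by simp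
  also have "\<dots> = card (orb ph ` D) + card ?F"
    using card_D[OF UT_D UT_a] by simp
  finally show ?thesis using sd ncomp by simp
qed

end

end



context rgl begin

lemma edges_UT: "T \<subseteq> rg_edges alpha D \<Longrightarrow> rg_edges alpha (\<Union>T) = T"
proof -
  assume T: "T \<subseteq> rg_edges alpha D"
  show ?thesis
  proof
    show "rg_edges alpha (\<Union>T) \<subseteq> T"
    proof
      fix c assume "c \<in> rg_edges alpha (\<Union>T)"
      then obtain x where x: "x \<in> \<Union>T" "c = {x, alpha x}" unfolding rg_edges_def by auto
      then show "c \<in> T" using memUT[OF T, of x] UT_D[OF T] by auto
    qed
    show "T \<subseteq> rg_edges alpha (\<Union>T)"
    proof
      fix c assume c: "c \<in> T"
      then obtain h where h: "h \<in> D" "c = {h, alpha h}" using T unfolding rg_edges_def by auto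
      then have "h \<in> \<Union>T" using c by auto
      then show "c \<in> rg_edges alpha (\<Union>T)" using h unfolding rg_edges_def by auto
    qed
  qed
qed

lemma UT_edges: "S \<subseteq> D \<Longrightarrow> alpha ` S \<subseteq> S \<Longrightarrow> \<Union>(rg_edges alpha S) = S"
  unfolding rg_edges_def by auto

lemma main:
  fixes A B d :: "'a::field"
  assumes A: "A \<noteq> 0" and B: "B \<noteq> 0" and d: "d \<noteq> 0"
  shows "medial_bracket V D vert alpha sigma A B d =
           A powi (rg_r V vert alpha D) * B powi (rg_n V vert alpha D)
         * d powi (int (rg_k V vert alpha D) - 1)
         * BR_poly V D vert alpha sigma (B * d / A) (A * d / B) (1 / d)"
proof -
  let ?C = "rg_edges alpha D"
  let ?F = "{v \<in> V. \<forall>h\<in>D. vert h \<noteq> v}"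
  let ?arcs = "{((h, True), (h, False)) | h. h \<in> D}"
  let ?pref = "A powi (rg_r V vert alpha D) * B powi (rg_n V vert alpha D)
         * d powi (int (rg_k V vert alpha D) - 1)"
  let ?summ = "\<lambda>S. (B * d / A) powi (rg_r V vert alpha D - rg_r V vert alpha S)
      * (A * d / B) powi (rg_n V vert alpha S)
      * (1 / d) powi (int (rg_k V vert alpha S) - int (rg_bc V vert alpha sigma S) + rg_n V vert alpha S)"
  have finC: "finite ?C" using finD unfolding rg_edges_def by simp
  have "medial_bracket V D vert alpha sigma A B d =
     (\<Sum>T\<in>Pow ?C. A ^ card T * B ^ (card ?C - card T)
        * d powi (int (state_delta ?C (medial_crossing alpha sigma) ?arcs (D \<times> UNIV) (card ?F) T) - 1))"
    unfolding medial_bracket_def kauffman_bracket_def ..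
  also have "\<dots> = (\<Sum>S\<in>spanning_subgraphs alpha D. ?pref * ?summ S)"
  proof (rule sum.reindex_bij_witness[where i="rg_edges alpha" and j="\<lambda>T. \<Union>T"])
    fix a assume a: "a \<in> Pow ?C"
    then show "rg_edges alpha (\<Union>a) = a" using edges_UT by auto
    show "\<Union>a \<in> spanning_subgraphs alpha D"
      unfolding spanning_subgraphs_def using UT_D[of a] UT_a[of a] a by auto
    have aC: "a \<subseteq> ?C" using a by auto
    have ca: "card (rg_edges alpha (\<Union>a)) = card a" using edges_UT[OF aC] by simp
    have le: "card a \<le> card ?C" using card_mono[OF finC aC] .
    show "?pref * ?summ (\<Union>a) = A ^ card a * B ^ (card ?C - card a)
        * d powi (int (state_delta ?C (medial_crossing alpha sigma) ?arcs (D \<times> UNIV) (card ?F) a) - 1)"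
      unfolding delta_eq[OF aC] rg_n_def rg_r_def ca
      by (rule alg[OF A B d le, symmetric])
  next
    fix b assume b: "b \<in> spanning_subgraphs alpha D"
    then have bD: "b \<subseteq> D" "alpha ` b \<subseteq> b" unfolding spanning_subgraphs_def by auto
    show "\<Union>(rg_edges alpha b) = b" using UT_edges[OF bD] .
    show "rg_edges alpha b \<in> Pow ?C" using bD unfolding rg_edges_def by auto
  qed
  also have "\<dots> = ?pref * BR_poly V D vert alpha sigma (B * d / A) (A * d / B) (1 / d)"
    unfolding BR_poly_def by (simp add: sum_distrib_left)
  finally show ?thesis .
qed

end


theorem theorem3p1:
  fixes V :: "'v set" and D :: "'d set" and vert :: "'d \<Rightarrow> 'v"
    and alpha sigma :: "'d \<Rightarrow> 'd" and A B d :: "'a::field"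
  assumes "ribbon_graph V D vert alpha sigma"
    and "A \<noteq> 0" and "B \<noteq> 0" and "d \<noteq> 0"
  shows "medial_bracket V D vert alpha sigma A B d =
           A powi (rg_r V vert alpha D) * B powi (rg_n V vert alpha D)
         * d powi (int (rg_k V vert alpha D) - 1)
         * BR_poly V D vert alpha sigma (B * d / A) (A * d / B) (1 / d)"
  using rgl.main[OF rgl.intro[OF assms(1)] assms(2) assms(3) assms(4)] .

end
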